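(* Let $\tilde\tau\in(0,1/2)$ and $R=2^{[1-H(\tau')]N/2}$, where $\tau'=(\tau N-2)/(N-1)$. Let $\mathcal N_R$ be a neighborhood of radius $R$ centered at an arbitrary vertex, and let $A$ be the event that for every $v\in\mathcal N_R$, a $+1$ agent would be happy at the location of $v$ at time $0$. Then $P(A)\to1$ as $N\to\infty$.
   Context: Setting: $G_n$ is the $n\times n$ torus grid, $w$ is a positive integer, and $N=(2w+1)^2$. $\mathcal N(v)$ is the set of vertices within $\ell_\infty$ distance $w$ of $v$, and a neighborhood of radius $\rho$ is defined analogously. In the initial configuration (time $0$), each vertex holds an agent of type $\pm1$, independently with probability $1/2$ each. The intolerance is $\tau=\lceil\tilde\tau N\rceil/N$, and $H$ is the binary entropy function. "A $+1$ agent would be happy at the location of $v$" means: if the agent at $v$ were replaced by an agent of type $+1$, with all other agents unchanged, then at least a fraction $\tau$ of the agents in $\mathcal N(v)$ would be of type $+1$. *)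

theory Defs
  imports "HOL-Probability.Probability"
begin

definition vertices :: "nat \<Rightarrow> (nat \<times> nat) set" where
  "vertices n = {0..<n} \<times> {0..<n}"

definition cyc_dist :: "nat \<Rightarrow> nat \<Rightarrow> nat \<Rightarrow> nat" where
  "cyc_dist n a b = (let d = (if a \<le> b then b - a else a - b) in min d (n - d))"

definition torus_dist :: "nat \<Rightarrow> nat \<times> nat \<Rightarrow> nat \<times> nat \<Rightarrow> nat" where
  "torus_dist n u v = max (cyc_dist n (fst u) (fst v)) (cyc_dist n (snd u) (snd v))"

definition nbhd_rad :: "nat \<Rightarrow> real \<Rightarrow> nat \<times> nat \<Rightarrow> (nat \<times> nat) set" where
  "nbhd_rad n r v = {u \<in> vertices n. real (torus_dist n u v) \<le> r}"

definition nbhd :: "nat \<Rightarrow> nat \<Rightarrow> nat \<times> nat \<Rightarrow> (nat \<times> nat) set" where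
  "nbhd n w v = nbhd_rad n (real w) v"

definition Nsize :: "nat \<Rightarrow> nat" where
  "Nsize w = (2 * w + 1)^2"

definition tau :: "real \<Rightarrow> nat \<Rightarrow> real" where
  "tau tt w = real_of_int \<lceil>tt * real (Nsize w)\<rceil> / real (Nsize w)"

definition tau' :: "real \<Rightarrow> nat \<Rightarrow> real" where
  "tau' tt w = (tau tt w * real (Nsize w) - 2) / (real (Nsize w) - 1)"

definition bin_entropy :: "real \<Rightarrow> real" where
  "bin_entropy p = - p * log 2 p - (1 - p) * log 2 (1 - p)"

definition Rrad :: "real \<Rightarrow> nat \<Rightarrow> real" where
  "Rrad tt w = 2 powr ((1 - bin_entropy (tau' tt w)) * real (Nsize w) / 2)"

definition configs :: "nat \<Rightarrow> ((nat \<times> nat) \<Rightarrow> int) set" where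
  "configs n = vertices n \<rightarrow>\<^sub>E {-1, 1}"

definition plus_happy :: "nat \<Rightarrow> nat \<Rightarrow> real \<Rightarrow> ((nat \<times> nat) \<Rightarrow> int) \<Rightarrow> nat \<times> nat \<Rightarrow> bool" where
  "plus_happy n w tt s v \<longleftrightarrow>
     real (card {u \<in> nbhd n w v. (s(v := 1)) u = 1}) \<ge> tau tt w * real (card (nbhd n w v))"

definition event_A :: "nat \<Rightarrow> nat \<Rightarrow> real \<Rightarrow> nat \<times> nat \<Rightarrow> ((nat \<times> nat) \<Rightarrow> int) set" where
  "event_A n w tt v0 = {s \<in> configs n. \<forall>v \<in> nbhd_rad n (Rrad tt w) v0. plus_happy n w tt s v}"

end

theory Submission imports Defs "HOL-Real_Asymp.Real_Asymp" begin



lemma cyc_le: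
  assumes "a < n" "b < n"
  shows "(cyc_dist n a b \<le> k) = ((a \<le> b + k \<and> b \<le> a + k) \<or> b + n \<le> a + k \<or> a + n \<le> b + k)"
  using assms by (auto simp: cyc_dist_def Let_def min_def split: if_splits)

lemma cyc_sym: "cyc_dist n a b = cyc_dist n b a"
  by (auto simp: cyc_dist_def Let_def)

lemma le_natfloor: "real d \<le> r \<Longrightarrow> d \<le> nat \<lfloor>r\<rfloor>"
  by (metis le_floor_iff le_nat_iff of_int_of_nat_eq of_nat_0_le_iff order_trans zero_le_floor)

definition cset :: "nat \<Rightarrow> nat \<Rightarrow> nat \<Rightarrow> nat set" where
  "cset n a k = {b. b < n \<and> cyc_dist n a b \<le> k}"

lemma cset_exact:
  assumes "a < n" "2*w+1 \<le> n"
  shows "card (cset n a w) = 2*w+1"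
proof -
  let ?I1 = "{a - w..<min (a+w+1) n}" and ?I2 = "{..<a+w+1-n}" and ?I3 = "{a+n-w..<n}"
  have eq: "cset n a w = ?I1 \<union> ?I2 \<union> ?I3"
    using assms by (auto simp: cset_def cyc_le)
  have d1: "?I1 \<inter> ?I2 = {}" using assms by auto
  have d2: "(?I1 \<union> ?I2) \<inter> ?I3 = {}" using assms by auto
  have "card (cset n a w) = card (?I1 \<union> ?I2) + card ?I3"
    unfolding eq by (rule card_Un_disjoint) (use d2 in auto)
  also have "\<dots> = card ?I1 + card ?I2 + card ?I3"
    by (subst card_Un_disjoint) (use d1 in auto)
  also have "\<dots> = 2*w+1" using assms
    by (cases "a + w + 1 \<le> n"; cases "w \<le> a") (simp_all add: min_def)
  finally show ?thesis .
qed

lemma cset_le: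
  assumes "a < n"
  shows "card (cset n a k) \<le> 4*k+1"
proof -
  have sub: "cset n a k \<subseteq> {a - k..a+k} \<union> {..<k} \<union> {n-k..<n}"
    using assms by (auto simp: cset_def cyc_le)
  have "card (cset n a k) \<le> card ({a - k..a+k} \<union> {..<k} \<union> {n-k..<n})"
    by (rule card_mono[OF _ sub]) simp
  also have "\<dots> \<le> card ({a - k..a+k} \<union> {..<k}) + card {n-k..<n}" by (rule card_Un_le)
  also have "\<dots> \<le> card {a - k..a+k} + card {..<k::nat} + card {n-k..<n}"
    using card_Un_le[of "{a - k..a+k}" "{..<k}"] by linarith
  also have "\<dots> \<le> 4*k+1" by simp
  finally show ?thesis .
qed

lemma nbhd_eq: "nbhd n w v = cset n (fst v) w \<times> cset n (snd v) w"
  by (auto simp: nbhd_def nbhd_rad_def vertices_def torus_dist_def cset_def cyc_sym)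

lemma nbhd_rad_sub: "0 \<le> r \<Longrightarrow> nbhd_rad n r v \<subseteq> cset n (fst v) (nat \<lfloor>r\<rfloor>) \<times> cset n (snd v) (nat \<lfloor>r\<rfloor>)"
  by (auto simp: nbhd_rad_def vertices_def torus_dist_def cset_def cyc_sym intro!: le_natfloor)

lemma card_nbhd:
  assumes "v \<in> vertices n" "2*w+1 \<le> n"
  shows "card (nbhd n w v) = Nsize w"
proof -
  have "fst v < n" "snd v < n" using assms(1) by (auto simp: vertices_def)
  then show ?thesis using assms(2)
    by (simp add: nbhd_eq card_cartesian_product cset_exact Nsize_def power2_eq_square)
qed

lemma card_nbhd_rad:
  assumes "v \<in> vertices n" "0 \<le> r"
  shows "real (card (nbhd_rad n r v)) \<le> (4*r+1)^2"
proof -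
  let ?k = "nat \<lfloor>r\<rfloor>"
  have "card (nbhd_rad n r v) \<le> card (cset n (fst v) ?k \<times> cset n (snd v) ?k)"
    by (rule card_mono[OF _ nbhd_rad_sub[OF assms(2)]]) (simp add: cset_def)
  also have "\<dots> \<le> (4*?k+1) * (4*?k+1)"
    unfolding card_cartesian_product
    using assms cset_le by (intro mult_mono) (auto simp: vertices_def)
  finally have "real (card (nbhd_rad n r v)) \<le> real ((4*?k+1) * (4*?k+1))" by linarith
  also have "\<dots> \<le> (4*r+1) * (4*r+1)"
  proof -
    have "real ?k \<le> r" using assms(2) by linarith
    then have "real (4*?k+1) \<le> 4*r+1" by simp
    then show ?thesis unfolding of_nat_mult by (intro mult_mono) auto
  qed
  finally show ?thesis by (simp add: power2_eq_square)
qed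

lemma self_in_nbhd: "v \<in> vertices n \<Longrightarrow> v \<in> nbhd n w v"
  by (auto simp: nbhd_def nbhd_rad_def torus_dist_def cyc_dist_def)



lemma card_configs: "card (configs n) = 2^(card (vertices n))"
proof -
  have f: "finite (vertices n)" by (simp add: vertices_def)
  have c: "card {-1,1::int} = 2" by simp
  show ?thesis unfolding configs_def by (simp only: card_PiE[OF f] c prod_constant)
qed

lemma card_small_subsets:
  assumes "finite T"
  shows "card {A. A \<subseteq> T \<and> card A \<le> m} \<le> (\<Sum>k\<le>m. card T choose k)"
proof -
  have "{A. A \<subseteq> T \<and> card A \<le> m} = (\<Union>k\<le>m. {A. A \<subseteq> T \<and> card A = k})" by auto
  then have "card {A. A \<subseteq> T \<and> card A \<le> m} \<le> (\<Sum>k\<le>m. card {A. A \<subseteq> T \<and> card A = k})"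
    using card_UN_le[of "{..m}" "\<lambda>k. {A. A \<subseteq> T \<and> card A = k}"] by simp
  also have "\<dots> = (\<Sum>k\<le>m. card T choose k)" using n_subsets[OF assms] by simp
  finally show ?thesis .
qed

lemma count_bound:
  assumes "finite V" "T \<subseteq> V"
  shows "card {s \<in> V \<rightarrow>\<^sub>E {-1,1::int}. card {u \<in> T. s u = 1} \<le> m}
         \<le> (\<Sum>k\<le>m. card T choose k) * 2^(card V - card T)"
proof -
  let ?E = "{s \<in> V \<rightarrow>\<^sub>E {-1,1::int}. card {u \<in> T. s u = 1} \<le> m}"
  define f where "f s = {u \<in> V. s u = (1::int)}" for s :: "_ \<Rightarrow> int"
  have injf: "inj_on f (V \<rightarrow>\<^sub>E {-1,1::int})"
  proof (rule inj_onI)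
    fix s t assume s: "s \<in> V \<rightarrow>\<^sub>E {-1,1::int}" and t: "t \<in> V \<rightarrow>\<^sub>E {-1,1::int}" and e: "f s = f t"
    show "s = t"
    proof (rule PiE_ext[OF s t])
      fix x assume x: "x \<in> V"
      have "s x = 1 \<longleftrightarrow> t x = 1" using e x unfolding f_def by blast
      moreover have "s x \<in> {-1,1}" "t x \<in> {-1,1}" using s t x by auto
      ultimately show "s x = t x" by auto
    qed
  qed
  have fT: "{u \<in> T. s u = 1} = f s \<inter> T" for s using assms(2) unfolding f_def by auto
  have "card ?E = card (f ` ?E)"
    by (rule card_image[symmetric]) (rule inj_on_subset[OF injf], auto)
  also have "\<dots> \<le> card {S. S \<subseteq> V \<and> card (S \<inter> T) \<le> m}"
  proof (rule card_mono)
    show "finite {S. S \<subseteq> V \<and> card (S \<inter> T) \<le> m}" using assms(1) by simp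
    show "f ` ?E \<subseteq> {S. S \<subseteq> V \<and> card (S \<inter> T) \<le> m}"
    proof
      fix S assume "S \<in> f ` ?E"
      then obtain s where s: "s \<in> ?E" "S = f s" by blast
      have "S \<subseteq> V" unfolding s(2) f_def by blast
      moreover have "card (S \<inter> T) \<le> m"
      proof -
        have "card {u \<in> T. s u = 1} \<le> m" using s(1) by blast
        then show ?thesis unfolding s(2) fT[of s] .
      qed
      ultimately show "S \<in> {S. S \<subseteq> V \<and> card (S \<inter> T) \<le> m}" by simp
    qed
  qed
  also have "\<dots> \<le> card ({A. A \<subseteq> T \<and> card A \<le> m} \<times> Pow (V - T))"
  proof -
    let ?g = "\<lambda>S. (S \<inter> T, S - T)"
    have "inj_on ?g {S. S \<subseteq> V \<and> card (S \<inter> T) \<le> m}"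
      by (rule inj_onI) (metis Int_Diff_Un prod.inject)
    moreover have "?g ` {S. S \<subseteq> V \<and> card (S \<inter> T) \<le> m} \<subseteq> {A. A \<subseteq> T \<and> card A \<le> m} \<times> Pow (V - T)"
      by blast
    moreover have "finite ({A. A \<subseteq> T \<and> card A \<le> m} \<times> Pow (V - T))"
    proof -
      have "finite T" using assms finite_subset by blast
      then have "finite {A. A \<subseteq> T \<and> card A \<le> m}" by simp
      then show ?thesis using assms(1) by simp
    qed
    ultimately show ?thesis using card_image card_mono by (metis (no_types, lifting))
  qed
  also have "\<dots> = card {A. A \<subseteq> T \<and> card A \<le> m} * 2^(card V - card T)"
  proof -
    have "finite T" using assms finite_subset by blast
    then have "card (V - T) = card V - card T" using assms(2) by (rule card_Diff_subset)
    moreover have "finite (V - T)" using assms(1) by simp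
    ultimately show ?thesis by (simp only: card_cartesian_product card_Pow)
  qed
  also have "\<dots> \<le> (\<Sum>k\<le>m. card T choose k) * 2^(card V - card T)"
  proof -
    have "finite T" using assms finite_subset by blast
    then show ?thesis using card_small_subsets[of T m] by (intro mult_right_mono) auto
  qed
  finally show ?thesis .
qed


lemma tau_N: "tau tt w * real (Nsize w) = real_of_int \<lceil>tt * real (Nsize w)\<rceil>"
  by (simp add: tau_def Nsize_def)

lemma fail_sub:
  assumes n: "2*w+1 \<le> n" and v: "v \<in> vertices n"
    and c: "2 \<le> \<lceil>tt * real (Nsize w)\<rceil>"
    and s: "s \<in> configs n" "\<not> plus_happy n w tt s v"
  shows "card {u \<in> nbhd n w v - {v}. s u = 1} \<le> nat (\<lceil>tt * real (Nsize w)\<rceil> - 2)"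
proof -
  have fin: "finite (nbhd n w v)" by (simp add: nbhd_eq cset_def)
  have vin: "v \<in> nbhd n w v" by (rule self_in_nbhd[OF v])
  have "{u \<in> nbhd n w v. (s(v := 1)) u = 1} = insert v {u \<in> nbhd n w v - {v}. s u = 1}"
    using vin by auto
  then have cc: "card {u \<in> nbhd n w v. (s(v := 1)) u = 1} = Suc (card {u \<in> nbhd n w v - {v}. s u = 1})"
    using fin by simp
  have "real (card {u \<in> nbhd n w v. (s(v := 1)) u = 1}) < tau tt w * real (card (nbhd n w v))"
    using s(2) unfolding plus_happy_def by simp
  then have "real (Suc (card {u \<in> nbhd n w v - {v}. s u = 1})) < real_of_int \<lceil>tt * real (Nsize w)\<rceil>"
    unfolding cc card_nbhd[OF v n] tau_N .
  then show ?thesis using c by linarith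
qed

lemma prob_bound:
  assumes n: "2*w+1 \<le> n" and v0: "v0 \<in> vertices n"
    and c: "2 \<le> \<lceil>tt * real (Nsize w)\<rceil>"
  shows "1 - measure_pmf.prob (pmf_of_set (configs n)) (event_A n w tt v0)
    \<le> real (card (nbhd_rad n (Rrad tt w) v0)) * real (\<Sum>k\<le>nat (\<lceil>tt * real (Nsize w)\<rceil> - 2). (Nsize w - 1) choose k) / 2^(Nsize w - 1)"
proof -
  let ?m = "nat (\<lceil>tt * real (Nsize w)\<rceil> - 2)"
  let ?M = "Nsize w - 1"
  let ?S = "\<Sum>k\<le>?m. ?M choose k"
  let ?C = "configs n" and ?V = "vertices n" and ?NR = "nbhd_rad n (Rrad tt w) v0"
  let ?F = "\<lambda>v. {s \<in> ?V \<rightarrow>\<^sub>E {-1,1::int}. card {u \<in> nbhd n w v - {v}. s u = 1} \<le> ?m}"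
  have finV: "finite ?V" by (simp add: vertices_def)
  have finC: "finite ?C" unfolding configs_def using finV by (simp add: finite_PiE)
  have cardC: "card ?C = 2^card ?V" by (rule card_configs)
  have neC: "?C \<noteq> {}" using cardC by auto
  have NRV: "?NR \<subseteq> ?V" by (auto simp: nbhd_rad_def)
  have finNR: "finite ?NR" using finV NRV finite_subset by blast
  have Fb: "card (?F v) \<le> ?S * 2^(card ?V - ?M)" if "v \<in> ?V" for v
  proof -
    have sub: "nbhd n w v - {v} \<subseteq> ?V" by (auto simp: nbhd_def nbhd_rad_def)
    have "card (nbhd n w v - {v}) = ?M"
      using card_nbhd[OF that n] self_in_nbhd[OF that] by (simp add: nbhd_eq cset_def)
    then show ?thesis using count_bound[OF finV sub, of ?m] by simp
  qed
  have "?C - event_A n w tt v0 \<subseteq> (\<Union>v\<in>?NR. ?F v)"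
  proof
    fix s assume s: "s \<in> ?C - event_A n w tt v0"
    then obtain v where v: "v \<in> ?NR" "\<not> plus_happy n w tt s v" by (auto simp: event_A_def)
    have "v \<in> ?V" using v NRV by auto
    then have "card {u \<in> nbhd n w v - {v}. s u = 1} \<le> ?m" using fail_sub[OF n _ c, of v s] s v by auto
    then show "s \<in> (\<Union>v\<in>?NR. ?F v)" using s v unfolding configs_def by auto
  qed
  then have "card (?C - event_A n w tt v0) \<le> card (\<Union>v\<in>?NR. ?F v)"
    by (intro card_mono) (use finNR finV in \<open>auto simp: finite_PiE\<close>)
  also have "\<dots> \<le> (\<Sum>v\<in>?NR. card (?F v))" by (rule card_UN_le[OF finNR])
  also have "\<dots> \<le> (\<Sum>v\<in>?NR. ?S * 2^(card ?V - ?M))" by (rule sum_mono) (use Fb NRV in auto)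
  also have "\<dots> = card ?NR * ?S * 2^(card ?V - ?M)" by simp
  finally have cb: "real (card (?C - event_A n w tt v0)) \<le> real (card ?NR * ?S * 2^(card ?V - ?M))" by linarith
  have MV: "?M \<le> card ?V"
  proof -
    have "nbhd n w v0 \<subseteq> ?V" by (auto simp: nbhd_def nbhd_rad_def)
    then have "card (nbhd n w v0) \<le> card ?V" using finV card_mono by blast
    then show ?thesis using card_nbhd[OF v0 n] by simp
  qed
  have AC: "event_A n w tt v0 \<subseteq> ?C" by (auto simp: event_A_def)
  have "measure_pmf.prob (pmf_of_set ?C) (event_A n w tt v0) = card (event_A n w tt v0) / card ?C"
    using measure_pmf_of_set[OF neC finC] AC by (simp add: Int_absorb1)
  moreover have "card (?C - event_A n w tt v0) = card ?C - card (event_A n w tt v0)"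
    by (rule card_Diff_subset[OF finite_subset[OF AC finC] AC])
  moreover have "card (event_A n w tt v0) \<le> card ?C" by (rule card_mono[OF finC AC])
  ultimately have "1 - measure_pmf.prob (pmf_of_set ?C) (event_A n w tt v0) = real (card (?C - event_A n w tt v0)) / card ?C"
    using neC finC by (simp add: of_nat_diff field_simps card_gt_0_iff)
  also have "\<dots> \<le> real (card ?NR * ?S * 2^(card ?V - ?M)) / 2^card ?V"
    using cb cardC by (simp add: divide_right_mono)
  also have "\<dots> = real (card ?NR) * real ?S / 2^?M"
  proof -
    have "(2::real)^card ?V = 2^(card ?V - ?M) * 2^?M" using MV by (simp flip: power_add)
    then show ?thesis by simp
  qed
  finally show ?thesis .
qed




definition bpmf :: "nat \<Rightarrow> real \<Rightarrow> nat \<Rightarrow> real" where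
  "bpmf M p k = real (M choose k) * p^k * (1-p)^(M-k)"

lemma choose_step: "(M choose k) * (M - k) = (M choose Suc k) * Suc k"
  using times_binomial_minus1_eq[of "Suc k" M] binomial_absorb_comp[of M k]
  by (simp add: mult.commute)

lemma bstep:
  fixes M m k :: nat and p :: real
  assumes "Suc k \<le> M" "p = m / M" "0 < m" "m < M"
  shows "bpmf M p k * real (M - k) * m = bpmf M p (Suc k) * real (Suc k) * (M - m)"
proof -
  have M0: "real M > 0" using assms by simp
  have e: "M - k = Suc (M - Suc k)" using assms by simp
  have "bpmf M p k * real (M - k) * m = real ((M choose k) * (M - k)) * p^k * (1-p)^(M - k) * m"
    by (simp add: bpmf_def)
  also have "\<dots> = real ((M choose Suc k) * Suc k) * p^k * (1-p)^(M - k) * m"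
    by (simp only: choose_step)
  also have "\<dots> = real ((M choose Suc k) * Suc k) * p^k * (1-p)^(M - Suc k) * (1 - p) * m"
    by (simp add: e)
  also have "\<dots> = real ((M choose Suc k) * Suc k) * p^k * (1-p)^(M - Suc k) * p * (M - m)"
  proof -
    have key: "(1-p) * real m = p * real (M-m)" using assms(2) assms(4) M0 by (simp add: field_simps of_nat_diff)
    show ?thesis by (metis key mult.assoc)
  qed
  also have "\<dots> = bpmf M p (Suc k) * real (Suc k) * (M - m)"
    by (simp add: bpmf_def algebra_simps)
  finally show ?thesis .
qed

lemma bpmf_nonneg: "0 \<le> p \<Longrightarrow> p \<le> 1 \<Longrightarrow> 0 \<le> bpmf M p k"
  by (simp add: bpmf_def)

lemma bpmf_sum: "(\<Sum>k\<le>M. bpmf M p k) = 1"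
  using binomial_ring[of p "1-p" M] by (simp add: bpmf_def)

lemma nat_ineq:
  fixes m M i j :: real
  assumes "0 \<le> i" "i + 1 \<le> j" "2*j \<le> m" "2*m \<le> M"
  shows "(m - 2*j) * (M - m + i + 1) \<le> (m - i) * (M - m)"
proof -
  have "(m - 2*j) * (M - m + i + 1) \<le> (m - 2*j) * (M - m + j)"
    by (rule mult_left_mono) (use assms in auto)
  also have "\<dots> = (m - 2*j) * (M-m) + (m - 2*j) * j" by (simp add: algebra_simps)
  also have "\<dots> \<le> (m - 2*j) * (M-m) + j * (M - m)"
    using mult_right_mono[of "m - 2*j" "M - m" j] assms by (simp add: mult.commute)
  also have "\<dots> = (m - j) * (M - m)" by (simp add: algebra_simps)
  also have "\<dots> \<le> (m - i) * (M - m)" by (rule mult_right_mono) (use assms in auto)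
  finally show ?thesis .
qed

lemma mode_step:
  fixes M m i j :: nat and p :: real
  assumes "p = m / M" "0 < m" "2*m \<le> M" "i < j" "2*j \<le> m"
  shows "(real m - 2 * real j) * bpmf M p (m - i) \<le> bpmf M p (m - i - 1) * m"
proof -
  define k where "k = m - i - 1"
  have k1: "Suc k = m - i" using assms unfolding k_def by simp
  have p01: "0 \<le> p" "p \<le> 1" using assms(2,3) unfolding assms(1) by (auto simp: divide_le_eq)
  have st: "bpmf M p k * real (M - k) * m = bpmf M p (Suc k) * real (Suc k) * (M - m)"
    by (rule bstep) (use assms k1 in auto)
  have Mk: "real (M - k) = real M - m + i + 1" using assms unfolding k_def by (simp add: of_nat_diff)
  have Sk: "real (Suc k) = real m - i" using k1 assms by (simp add: of_nat_diff)
  have ni: "(real m - 2 * real j) * (real M - m + i + 1) \<le> (real m - i) * (real M - m)"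
    by (rule nat_ineq) (use assms in auto)
  have bn: "0 \<le> bpmf M p (Suc k)" by (rule bpmf_nonneg[OF p01])
  have "(real m - 2 * real j) * bpmf M p (Suc k) * real (M - k) \<le> bpmf M p (Suc k) * ((real m - i) * (real M - m))"
  proof -
    have "(real m - 2 * real j) * bpmf M p (Suc k) * real (M - k) = bpmf M p (Suc k) * ((real m - 2 * real j) * (real M - m + i + 1))"
      unfolding Mk by (simp add: algebra_simps)
    then show ?thesis using mult_left_mono[OF ni bn] by linarith
  qed
  also have "\<dots> = bpmf M p k * m * real (M - k)"
  proof -
    have Mm: "real (M - m) = real M - m" using assms by (simp add: of_nat_diff)
    have "bpmf M p k * real (M - k) * m = bpmf M p (Suc k) * ((real m - i) * (real M - m))"
      using st unfolding Sk Mm by (simp add: mult.assoc)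
    then show ?thesis by (simp add: mult_ac)
  qed
  finally have "(real m - 2 * real j) * bpmf M p (Suc k) * real (M - k) \<le> bpmf M p k * m * real (M - k)" .
  moreover have "real (M - k) > 0" using assms unfolding k_def by simp
  ultimately have "(real m - 2 * real j) * bpmf M p (Suc k) \<le> bpmf M p k * m" by simp
  then show ?thesis using k1 unfolding k_def by simp
qed

lemma mode_iter:
  fixes M m i j :: nat and p :: real
  assumes "p = m / M" "0 < m" "2*m \<le> M" "2*j \<le> m" "i \<le> j"
  shows "((real m - 2 * real j) / m)^i * bpmf M p m \<le> bpmf M p (m - i)"
  using assms(5)
proof (induction i)
  case 0
  then show ?case by simp
next
  case (Suc i)
  have x0: "0 \<le> (real m - 2 * real j) / m" using assms by simp
  have "((real m - 2 * real j) / m)^(Suc i) * bpmf M p m = (real m - 2 * real j) / m * (((real m - 2 * real j) / m)^i * bpmf M p m)"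
    by simp
  also have "\<dots> \<le> (real m - 2 * real j) / m * bpmf M p (m - i)"
    by (rule mult_left_mono[OF Suc.IH x0]) (use Suc in simp)
  also have "\<dots> \<le> bpmf M p (m - i - 1)"
    using mode_step[OF assms(1-3), of i j] Suc assms by (simp add: divide_le_eq mult.commute)
  finally show ?case by simp
qed

lemma mode_bound_j:
  fixes M m j :: nat and p :: real
  assumes "p = m / M" "0 < m" "2*m \<le> M" "4*j^2 \<le> m"
  shows "bpmf M p m \<le> 2 / (j+1)"
proof -
  have p01: "0 \<le> p" "p \<le> 1" using assms(2,3) unfolding assms(1) by (auto simp: divide_le_eq)
  have jm: "2*j \<le> m"
  proof (cases "j = 0")
    case False then have "2*j \<le> 4*j^2" by (simp add: power2_eq_square)
    then show ?thesis using assms by linarith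
  qed simp
  define x where "x = (real m - 2 * real j) / m"
  have x0: "0 \<le> x" "x \<le> 1" using jm assms unfolding x_def by auto
  have "1 + real j * (- (2 * real j / m)) \<le> (1 + (- (2 * real j / m)))^j"
    by (rule Bernoulli_inequality) (use jm assms in \<open>simp add: field_simps\<close>)
  moreover have "1 + (- (2 * real j / m)) = x" unfolding x_def using assms by (simp add: field_simps)
  moreover have "1 + real j * (- (2 * real j / m)) \<ge> 1/2"
  proof -
    have "real (4*j^2) \<le> real m" using assms(4) by linarith
    then have "4 * real j * real j \<le> real m" by (simp add: power2_eq_square)
    then show ?thesis using assms by (simp add: field_simps)
  qed
  ultimately have xj: "x^j \<ge> 1/2" by (metis order_trans)
  have bm0: "0 \<le> bpmf M p m" by (rule bpmf_nonneg[OF p01])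
  have lb: "bpmf M p m / 2 \<le> bpmf M p (m - i)" if "i \<le> j" for i
  proof -
    have "bpmf M p m / 2 \<le> x^j * bpmf M p m" using mult_right_mono[OF xj bm0] by simp
    also have "\<dots> \<le> x^i * bpmf M p m"
      by (rule mult_right_mono[OF power_decreasing[OF that x0] bm0])
    also have "\<dots> \<le> bpmf M p (m - i)" unfolding x_def by (rule mode_iter[OF assms(1-3) jm that])
    finally show ?thesis .
  qed
  have "(j+1) * (bpmf M p m / 2) = (\<Sum>i\<le>j. bpmf M p m / 2)" by simp
  also have "\<dots> \<le> (\<Sum>i\<le>j. bpmf M p (m - i))" by (rule sum_mono) (use lb in auto)
  also have "\<dots> = (\<Sum>k\<in>(\<lambda>i. m - i) ` {..j}. bpmf M p k)"
  proof -
    have "inj_on (\<lambda>i. m - i) {..j}" using jm by (auto simp: inj_on_def)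
    then show ?thesis by (simp add: sum.reindex)
  qed
  also have "\<dots> \<le> (\<Sum>k\<le>M. bpmf M p k)"
    by (rule sum_mono2) (use assms bpmf_nonneg[OF p01] in auto)
  also have "\<dots> = 1" by (rule bpmf_sum)
  finally have "(j+1) * (bpmf M p m / 2) \<le> 1" .
  then show ?thesis by (simp add: field_simps)
qed

lemma mode_bound:
  fixes M m :: nat and p :: real
  assumes "p = m / M" "0 < m" "2*m \<le> M"
  shows "bpmf M p m \<le> 4 / sqrt m"
proof -
  define j where "j = nat \<lfloor>sqrt m / 2\<rfloor>"
  have s0: "sqrt m > 0" using assms by simp
  have j1: "real j \<le> sqrt m / 2" unfolding j_def using s0 by linarith
  have j2: "sqrt m / 2 < real j + 1" unfolding j_def using s0 by linarith
  have "real (4*j^2) \<le> real m"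
  proof -
    have "(2 * real j)^2 \<le> (sqrt m)^2" by (rule power_mono) (use j1 in auto)
    then show ?thesis by (simp add: power_mult_distrib)
  qed
  then have "4*j^2 \<le> m" by linarith
  then have "bpmf M p m \<le> 2 / (j+1)" by (rule mode_bound_j[OF assms])
  also have "\<dots> \<le> 4 / sqrt m" using j2 s0 by (simp add: field_simps)
  finally show ?thesis .
qed





lemma tail_iter:
  fixes M m :: nat and \<rho> :: real
  assumes "0 \<le> \<rho>" "m \<le> M" "real m \<le> \<rho> * (real M - m + 1)" "i \<le> m"
  shows "real (M choose (m - i)) \<le> \<rho>^i * real (M choose m)"
  using assms(4)
proof (induction i)
  case 0 then show ?case by simp
next
  case (Suc i)
  define k where "k = m - Suc i"
  have k1: "Suc k = m - i" using Suc unfolding k_def by simp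
  have Mk: "real (M - k) > 0" using Suc assms unfolding k_def by simp
  have kk: "real (Suc k) \<le> \<rho> * real (M - k)"
  proof -
    have "real (Suc k) \<le> real m" using k1 by simp
    also have "\<dots> \<le> \<rho> * (real M - m + 1)" by (rule assms(3))
    also have "\<dots> \<le> \<rho> * real (M - k)"
      by (rule mult_left_mono) (use assms Suc k1 in \<open>auto simp: of_nat_diff k_def\<close>)
    finally show ?thesis .
  qed
  have "real (M choose k) * real (M - k) = real (M choose Suc k) * real (Suc k)"
    using choose_step[of M k] by (metis of_nat_mult)
  also have "\<dots> \<le> real (M choose Suc k) * (\<rho> * real (M - k))"
    by (rule mult_left_mono[OF kk]) simp
  finally have "real (M choose k) \<le> \<rho> * real (M choose Suc k)"
    using Mk by (simp add: mult.commute mult.left_commute)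
  also have "\<dots> \<le> \<rho> * (\<rho>^i * real (M choose m))"
    using Suc k1 by (intro mult_left_mono assms(1)) simp_all
  finally show ?case unfolding k_def by simp
qed

lemma tail_bound:
  fixes M m :: nat and \<rho> :: real
  assumes "0 \<le> \<rho>" "\<rho> < 1" "m \<le> M" "real m \<le> \<rho> * (real M - m + 1)"
  shows "real (\<Sum>k\<le>m. M choose k) \<le> real (M choose m) / (1 - \<rho>)"
proof -
  have "real (\<Sum>k\<le>m. M choose k) = (\<Sum>k\<le>m. real (M choose k))" by simp
  also have "\<dots> = (\<Sum>i\<le>m. real (M choose (m - i)))"
  proof -
    have "(\<Sum>i\<le>m. real (M choose (m - i))) = (\<Sum>k\<in>(\<lambda>i. m - i) ` {..m}. real (M choose k))"
      by (subst sum.reindex) (auto simp: inj_on_def)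
    also have "(\<lambda>i. m - i) ` {..m} = {..m}"
    proof (auto simp: image_def)
      fix x assume "x \<le> m" then show "\<exists>xa\<in>{..m}. x = m - xa" by (intro bexI[of _ "m - x"]) auto
    qed
    finally show ?thesis by simp
  qed
  also have "\<dots> \<le> (\<Sum>i\<le>m. \<rho>^i * real (M choose m))"
    by (rule sum_mono) (rule tail_iter[OF assms(1,3,4)], simp)
  also have "\<dots> = (\<Sum>i<Suc m. \<rho>^i) * real (M choose m)"
    by (simp add: sum_distrib_right lessThan_Suc_atMost)
  also have "\<dots> = (1 - \<rho>^Suc m) / (1 - \<rho>) * real (M choose m)"
    using assms by (simp only: sum_gp_strict) simp
  also have "\<dots> \<le> 1 / (1 - \<rho>) * real (M choose m)"
    using assms by (intro mult_right_mono divide_right_mono) auto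
  finally show ?thesis by simp
qed



lemma ent_alt: "bin_entropy p = -(p * log 2 p) - ((1-p) * log 2 (1-p))"
  by (simp add: bin_entropy_def)

lemma ent_nonneg: "0 < p \<Longrightarrow> p < 1 \<Longrightarrow> 0 \<le> bin_entropy p"
proof -
  assume p: "0 < p" "p < 1"
  have "p * log 2 p \<le> 0" using p by (intro mult_nonneg_nonpos) auto
  moreover have "(1-p) * log 2 (1-p) \<le> 0" using p by (intro mult_nonneg_nonpos) auto
  ultimately show ?thesis unfolding ent_alt by linarith
qed

lemma ln_aux: "0 < (x::real) \<Longrightarrow> - ln x \<le> ln 2 + 1/(2*x) - 1"
proof -
  assume x: "0 < x"
  have a: "ln (1/(2*x)) \<le> 1/(2*x) - 1" using x by (intro ln_le_minus_one) auto
  then show ?thesis using x by (simp add: ln_div ln_mult)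
qed

lemma ent_le1: "0 < p \<Longrightarrow> p < 1 \<Longrightarrow> bin_entropy p \<le> 1"
proof -
  assume p: "0 < p" "p < 1"
  have a': "- ln p \<le> ln 2 + 1/(2*p) - 1" using p by (intro ln_aux) auto
  have b': "- ln (1-p) \<le> ln 2 + 1/(2*(1-p)) - 1" using p by (intro ln_aux) auto
  have "p * (- ln p) \<le> p * (ln 2 + 1/(2*p) - 1)" using p by (intro mult_left_mono[OF a']) auto
  also have "\<dots> = p * ln 2 + 1/2 - p" using p by (simp add: field_simps)
  finally have A: "p * (- ln p) \<le> p * ln 2 + 1/2 - p" .
  have "(1-p) * (- ln (1-p)) \<le> (1-p) * (ln 2 + 1/(2*(1-p)) - 1)" using p by (intro mult_left_mono[OF b']) auto
  also have "\<dots> = (1-p) * ln 2 + 1/2 - (1-p)" using p by (simp add: field_simps)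
  finally have B: "(1-p) * (- ln (1-p)) \<le> (1-p) * ln 2 + 1/2 - (1-p)" .
  have "bin_entropy p * ln 2 = p * (- ln p) + (1-p) * (- ln (1-p))"
    unfolding ent_alt log_def by (simp add: field_simps)
  also have "\<dots> \<le> ln 2" using A B by (simp add: algebra_simps)
  finally show ?thesis by simp
qed

lemma ent_pow:
  fixes M m :: nat
  assumes "0 < m" "m < M"
  shows "2 powr (- bin_entropy (m/M) * M) = (m/M)^m * (1 - m/M)^(M-m)"
proof -
  define p where "p = real m / M"
  have p: "0 < p" "p < 1" using assms unfolding p_def by auto
  have M0: "real M > 0" using assms by simp
  have e1: "M * p = m" unfolding p_def using M0 by simp
  have e2: "M * (1 - p) = real (M - m)" unfolding p_def using M0 assms by (simp add: field_simps of_nat_diff)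
  have "- bin_entropy p * M = (M*p) * log 2 p + (M * (1-p)) * log 2 (1-p)"
    unfolding bin_entropy_def by (simp add: algebra_simps)
  also have "\<dots> = log 2 p * m + log 2 (1-p) * real (M - m)" unfolding e1 e2 by (simp add: mult.commute)
  finally have h: "- bin_entropy p * M = log 2 p * m + log 2 (1-p) * real (M - m)" .
  have "2 powr (- bin_entropy p * M) = 2 powr (log 2 p * m) * 2 powr (log 2 (1-p) * real (M - m))"
    unfolding h by (rule powr_add)
  also have "\<dots> = (2 powr log 2 p) powr m * (2 powr log 2 (1-p)) powr real (M - m)"
    by (simp add: powr_powr)
  also have "\<dots> = p^m * (1-p)^(M-m)" using p by (simp add: powr_realpow)
  finally show ?thesis unfolding p_def .
qed


lemma analytic:
  fixes M m :: nat and tt R X :: real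
  assumes tt: "0 < tt" "tt < 1/2" and m: "0 < m" "real m \<le> tt * real M"
    and R: "R = 2 powr ((1 - bin_entropy (real m / real M)) * real (M+1) / 2)"
    and X: "X \<le> (4*R+1)^2" "0 \<le> X"
  shows "X * real (\<Sum>k\<le>m. M choose k) / 2^M \<le> 200 / ((1 - tt/(1-tt)) * sqrt m)"
proof -
  have M0: "real M > 0" using m by (cases "M = 0") auto
  have mM: "2*m \<le> M"
  proof -
    have "tt * real M \<le> (1/2) * real M" by (rule mult_right_mono) (use tt in auto)
    then have "real m \<le> real M / 2" using m by linarith
    then show ?thesis by linarith
  qed
  have mM': "m < M" using mM m by linarith
  define p where "p = real m / real M"
  have p: "0 < p" "p < 1" unfolding p_def using m mM' by auto
  define H where "H = bin_entropy p"
  have H: "0 \<le> H" "H \<le> 1" unfolding H_def using ent_nonneg[OF p] ent_le1[OF p] by auto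
  have R1: "1 \<le> R" unfolding R p_def[symmetric] H_def[symmetric] using H
    by (intro ge_one_powr_ge_zero) auto
  have X25: "X \<le> 25 * R^2"
  proof -
    have "(4*R+1)^2 \<le> (5*R)^2" using R1 by (intro power_mono) auto
    then show ?thesis using X by (simp add: power_mult_distrib)
  qed
  define \<rho> where "\<rho> = tt / (1 - tt)"
  have \<rho>: "0 \<le> \<rho>" "\<rho> < 1" unfolding \<rho>_def using tt by (auto simp: field_simps)
  have tailc: "real m \<le> \<rho> * (real M - m + 1)"
  proof -
    have "real m * (1 - tt) \<le> tt * (real M - m + 1)" using m tt by (simp add: algebra_simps)
    then show ?thesis unfolding \<rho>_def using tt by (simp add: field_simps)
  qed
  have S: "real (\<Sum>k\<le>m. M choose k) \<le> real (M choose m) / (1 - \<rho>)"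
    by (rule tail_bound[OF \<rho> _ tailc]) (use mM in simp)
  have R2: "R^2 = 2 powr ((1 - H) * real (M+1))"
  proof -
    have "R^2 = R * R" by (simp add: power2_eq_square)
    also have "\<dots> = 2 powr ((1 - H) * real (M+1))" unfolding R p_def[symmetric] H_def[symmetric]
      by (simp flip: powr_add)
    finally show ?thesis .
  qed
  have R2M: "R^2 / 2^M \<le> 2 * p^m * (1-p)^(M-m)"
  proof -
    have "R^2 / 2^M = 2 powr ((1 - H) * real (M+1) - real M)"
      unfolding R2 by (simp add: powr_diff powr_realpow)
    also have "\<dots> \<le> 2 powr (1 + (- H * real M))"
      using H by (intro powr_mono) (auto simp: algebra_simps)
    also have "\<dots> = 2 * 2 powr (- H * real M)" using powr_add[of 2 1 "- H * real M"] by simp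
    also have "\<dots> = 2 * (p^m * (1-p)^(M-m))" unfolding H_def p_def using ent_pow[OF m(1) mM'] by simp
    finally show ?thesis by simp
  qed
  have bm: "bpmf M p m \<le> 4 / sqrt m" by (rule mode_bound[OF p_def m(1) mM])
  have Cp: "real (M choose m) * (R^2 / 2^M) \<le> 2 * bpmf M p m"
    using mult_left_mono[OF R2M, of "real (M choose m)"] unfolding bpmf_def by (simp add: algebra_simps)
  have "X * real (\<Sum>k\<le>m. M choose k) / 2^M \<le> (25 * R^2) * (real (M choose m) / (1 - \<rho>)) / 2^M"
    using X25 S X(2) by (intro divide_right_mono mult_mono) (auto intro: sum_nonneg)
  also have "\<dots> = 25 / (1 - \<rho>) * (real (M choose m) * (R^2 / 2^M))" by (simp add: field_simps)
  also have "\<dots> \<le> 25 / (1 - \<rho>) * (2 * bpmf M p m)" using \<rho> by (intro mult_left_mono[OF Cp]) auto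
  also have "\<dots> \<le> 25 / (1 - \<rho>) * (2 * (4 / sqrt m))" using \<rho> bm by (intro mult_left_mono) auto
  also have "\<dots> = 200 / ((1 - \<rho>) * sqrt m)" by simp
  finally show ?thesis unfolding \<rho>_def .
qed


lemma per_w:
  fixes tt :: real and n w :: nat and v0
  assumes tt: "0 < tt" "tt < 1/2" and n: "2*w+1 \<le> n" and v0: "v0 \<in> vertices n"
    and c3: "3 \<le> tt * real (Nsize w)"
  shows "1 - measure_pmf.prob (pmf_of_set (configs n)) (event_A n w tt v0)
    \<le> 200 / ((1 - tt/(1-tt)) * sqrt (tt * real (Nsize w) - 2))"
proof -
  define N where "N = Nsize w"
  define c where "c = \<lceil>tt * real N\<rceil>"
  define m where "m = nat (c - 2)"
  define M where "M = N - 1"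
  have N1: "1 \<le> N" unfolding N_def Nsize_def by simp
  have cge: "tt * real N \<le> real_of_int c" unfolding c_def by simp
  have clt: "real_of_int c < tt * real N + 1" unfolding c_def by linarith
  have c2: "3 \<le> c" using cge c3 unfolding N_def by linarith
  have mr: "real m = real_of_int c - 2" unfolding m_def using c2 by simp
  have MN: "real M = real N - 1" unfolding M_def using N1 by (simp add: of_nat_diff)
  have m0: "0 < m" using mr c2 by linarith
  have mtt: "real m \<le> tt * real M"
  proof -
    have "real m < tt * real N - 1" using mr clt by linarith
    also have "\<dots> \<le> tt * real M" unfolding MN using tt by (simp add: algebra_simps)
    finally show ?thesis by simp
  qed
  have M0: "0 < real M" using mtt m0 tt by (smt (verit, best) mult_nonneg_nonpos of_nat_0_less_iff)
  have tau'_eq: "tau' tt w = real m / real M"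
  proof -
    have tN: "tau tt w * real N = real_of_int c" unfolding N_def c_def by (rule tau_N)
    show ?thesis unfolding tau'_def N_def[symmetric] tN mr MN by simp
  qed
  define R where "R = Rrad tt w"
  have Rdef: "R = 2 powr ((1 - bin_entropy (real m / real M)) * real (M+1) / 2)"
    unfolding R_def Rrad_def tau'_eq N_def[symmetric] using N1 by (simp add: M_def)
  have R0: "0 \<le> R" unfolding R_def Rrad_def by simp
  have X: "real (card (nbhd_rad n R v0)) \<le> (4*R+1)^2" by (rule card_nbhd_rad[OF v0 R0])
  have "1 - measure_pmf.prob (pmf_of_set (configs n)) (event_A n w tt v0)
    \<le> real (card (nbhd_rad n R v0)) * real (\<Sum>k\<le>m. M choose k) / 2^M"
    using prob_bound[OF n v0, of tt] c2 unfolding R_def m_def M_def c_def N_def by simp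
  also have "\<dots> \<le> 200 / ((1 - tt/(1-tt)) * sqrt m)"
    by (rule analytic[OF tt m0 mtt Rdef X]) simp
  also have "\<dots> \<le> 200 / ((1 - tt/(1-tt)) * sqrt (tt * real (Nsize w) - 2))"
  proof -
    have r: "0 < 1 - tt/(1-tt)" using tt by (simp add: field_simps)
    have "0 < tt * real (Nsize w) - 2" using c3 by linarith
    moreover have "tt * real (Nsize w) - 2 \<le> real m" using mr cge unfolding N_def by linarith
    ultimately show ?thesis using r
      by (intro divide_left_mono mult_left_mono mult_pos_pos) auto
  qed
  finally show ?thesis .
qed

theorem lemmaA4:
  fixes tt :: real and nn :: "nat \<Rightarrow> nat" and v0 :: "nat \<Rightarrow> nat \<times> nat"
  assumes "0 < tt" and "tt < 1/2"
    and "\<And>w. nn w \<ge> 2 * w + 1"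
    and "\<And>w. v0 w \<in> vertices (nn w)"
  shows "(\<lambda>w. measure_pmf.prob (pmf_of_set (configs (nn w))) (event_A (nn w) w tt (v0 w)))
           \<longlonglongrightarrow> 1"
proof -
  let ?P = "\<lambda>w. measure_pmf.prob (pmf_of_set (configs (nn w))) (event_A (nn w) w tt (v0 w))"
  let ?g = "\<lambda>w::nat. 200 / ((1 - tt/(1-tt)) * sqrt (tt * real w - 2))"
  have g: "?g \<longlonglongrightarrow> 0" using assms(1,2) by real_asymp
  have ev: "eventually (\<lambda>w. norm (1 - ?P w) \<le> ?g w) sequentially"
  proof -
    obtain w0 :: nat where w0: "3 / tt \<le> real w0" using real_arch_simple by blast
    show ?thesis unfolding eventually_sequentially
    proof (intro exI allI impI)
      fix w assume "w0 \<le> w"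
      then have "3 / tt \<le> real w" using w0 by linarith
      then have tw: "3 \<le> tt * real w" using assms(1) by (simp add: field_simps)
      have wN: "real w \<le> real (Nsize w)" unfolding Nsize_def by (simp add: power2_eq_square)
      have c3: "3 \<le> tt * real (Nsize w)" using tw mult_left_mono[OF wN, of tt] assms(1) by linarith
      have b: "1 - ?P w \<le> 200 / ((1 - tt/(1-tt)) * sqrt (tt * real (Nsize w) - 2))"
        by (rule per_w[OF assms(1,2) assms(3) assms(4) c3])
      have "200 / ((1 - tt/(1-tt)) * sqrt (tt * real (Nsize w) - 2)) \<le> ?g w"
      proof -
        have r: "0 < 1 - tt/(1-tt)" using assms(1,2) by (simp add: field_simps)
        have "0 < tt * real w - 2" using tw by linarith
        moreover have "tt * real w - 2 \<le> tt * real (Nsize w) - 2" using mult_left_mono[OF wN, of tt] assms(1) by linarith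
        ultimately show ?thesis using r
          by (intro divide_left_mono mult_left_mono mult_pos_pos) auto
      qed
      moreover have "0 \<le> 1 - ?P w" by (simp add: measure_pmf.prob_le_1)
      ultimately show "norm (1 - ?P w) \<le> ?g w" using b by simp
    qed
  qed
  have "(\<lambda>w. 1 - ?P w) \<longlonglongrightarrow> 0" by (rule Lim_null_comparison[OF ev g])
  then have "(\<lambda>w. 1 - (1 - ?P w)) \<longlonglongrightarrow> 1 - 0" by (intro tendsto_diff) auto
  then show ?thesis by simp
qed

end
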